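(* Let $k=2$, and let $p_{1j},p_{2j}\in[0,1]$ with $p_{1j}+p_{2j}=1$ for $j=1,\dots,N$, not all $p_{1j}$ equal. Let $r_1,\dots,r_N$ be any ranks (a permutation of $\{1,\dots,N\}$). With $R^*_i=\sum_j p_{ij}r_j$, $\bar p_i=N^{-1}\sum_j p_{ij}$ and $\tilde\sigma_i^2=\frac{N(N+1)}{12}\sum_j(p_{ij}-\bar p_i)^2$, one has $$\frac{R^*_1-\frac{N+1}{2}\sum_{j=1}^Np_{1j}}{\tilde\sigma_1}=-\frac{R^*_2-\frac{N+1}{2}\sum_{j=1}^Np_{2j}}{\tilde\sigma_2}.$$ Consequently, the two-sample generalized Kruskal--Wallis statistic $$H^*=\Big(R^*_i-\frac{N+1}{2}\sum_{j=1}^Np_{ij}\Big)^2\Big/\tilde\sigma_i^2$$ does not depend on the choice $i\in\{1,2\}$, and under the hypotheses of the two-sample asymptotic normality result (the rank vector uniform over permutations of $\{1,\dots,N\}$, and for the fixed sequence $(p_{1j})_{j\ge1}$: $\bar p_1\to\pi_1\in(0,1)$ and $N^{-1}\sum_{j}(p_{1j}-\bar p_1)^2\to\nu_1>0$) $H^*$ converges in distribution to $\chi^2(1)$.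
   Context: $p_{ij}=P(G_j=i)$ is the probability that observation $j$ belongs to group $i$; $r_j$ is the rank of $Y_j$ in the pooled sample of size $N$; $R^*_i$ is the probability-weighted rank-sum of group $i$. *)

theory Defs
  imports "HOL-Probability.Probability" "HOL-Combinatorics.Permutations"
begin

definition Rstar :: "(nat \<Rightarrow> real) \<Rightarrow> (nat \<Rightarrow> nat) \<Rightarrow> nat \<Rightarrow> real" where
  "Rstar p r N = (\<Sum>j=1..N. p j * real (r j))"

definition pbar :: "(nat \<Rightarrow> real) \<Rightarrow> nat \<Rightarrow> real" where
  "pbar p N = (\<Sum>j=1..N. p j) / real N"

definition sigma2 :: "(nat \<Rightarrow> real) \<Rightarrow> nat \<Rightarrow> real" where
  "sigma2 p N = real N * (real N + 1) / 12 * (\<Sum>j=1..N. (p j - pbar p N)^2)"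

definition centered :: "(nat \<Rightarrow> real) \<Rightarrow> (nat \<Rightarrow> nat) \<Rightarrow> nat \<Rightarrow> real" where
  "centered p r N = Rstar p r N - (real N + 1) / 2 * (\<Sum>j=1..N. p j)"

definition Hstar :: "(nat \<Rightarrow> real) \<Rightarrow> (nat \<Rightarrow> nat) \<Rightarrow> nat \<Rightarrow> real" where
  "Hstar p r N = (centered p r N)^2 / sigma2 p N"

definition rank_law :: "nat \<Rightarrow> (nat \<Rightarrow> nat) measure" where
  "rank_law N = measure_pmf (pmf_of_set {\<sigma>. \<sigma> permutes {1..N}})"

definition chi2_1 :: "real measure" where
  "chi2_1 = distr std_normal_distribution borel (\<lambda>x. x^2)"

end

theory Submission
  imports Defs
begin


lemma sum_Icc_real: "(\<Sum>j=1..N. real j) = real N * (real N + 1) / 2"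
  by (induction N) (auto simp: field_simps)

lemma sum_perm_real:
  assumes "bij_betw r {1..N} {1..(N::nat)}"
  shows "(\<Sum>j=1..N. real (r j)) = real N * (real N + 1) / 2"
proof -
  have "(\<Sum>j=1..N. real (r j)) = (\<Sum>i=1..N. real i)"
    using sum.reindex_bij_betw[OF assms, of real] by (simp add: comp_def)
  then show ?thesis using sum_Icc_real[of N] by simp
qed

lemma part1_aux:
  assumes h: "\<forall>j\<in>{1..N}. p1 j + p2 j = 1" and r: "bij_betw r {1..N} {1..(N::nat)}"
  shows "centered p2 r N = - centered p1 r N" "sigma2 p2 N = sigma2 p1 N"
proof -
  have p2: "\<And>j. j \<in> {1..N} \<Longrightarrow> p2 j = 1 - p1 j" using h by force
  have s2: "(\<Sum>j=1..N. p2 j) = real N - (\<Sum>j=1..N. p1 j)"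
    using sum.cong[OF refl p2, of "{1..N}"] by (simp add: sum_subtractf)
  have "Rstar p2 r N = (\<Sum>j=1..N. real (r j)) - Rstar p1 r N"
    unfolding Rstar_def sum_subtractf[symmetric] by (rule sum.cong) (auto simp: p2 algebra_simps)
  then show "centered p2 r N = - centered p1 r N"
    unfolding centered_def s2 sum_perm_real[OF r] by (simp add: field_simps)
  show "sigma2 p2 N = sigma2 p1 N"
  proof (cases "N = 0")
    case True then show ?thesis by (simp add: sigma2_def)
  next
    case False
    have pb: "pbar p2 N = 1 - pbar p1 N" unfolding pbar_def s2 using False by (simp add: field_simps)
    have "(\<Sum>j=1..N. (p2 j - pbar p2 N)^2) = (\<Sum>j=1..N. (p1 j - pbar p1 N)^2)"
      by (rule sum.cong) (auto simp: p2 pb power2_commute)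
    then show ?thesis unfolding sigma2_def by simp
  qed
qed



definition U :: "real measure" where "U = restrict_space lborel {0..1}"
definition PP :: "nat \<Rightarrow> (nat \<Rightarrow> real) measure" where "PP N = PiM {1..N} (\<lambda>_. U)"
definition hh :: "real \<Rightarrow> real \<Rightarrow> real" where "hh a b = (if a \<le> b then 1 else 0) - b + a - 1/2"

lemma space_U[simp]: "space U = {0..1}"
  by (simp add: U_def space_restrict_space)

lemma prob_U: "prob_space U"
proof
  show "emeasure U (space U) = 1"
    unfolding U_def by (subst emeasure_restrict_space) (auto simp: space_restrict_space)
qed

interpretation U: prob_space U by (rule prob_U)

interpretation PS: product_sigma_finite "\<lambda>_::nat. U"
  unfolding product_sigma_finite_def using U.sigma_finite_measure_axioms by blast

lemma prob_PP: "prob_space (PP N)"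
  unfolding PP_def by (rule prob_space_PiM) (rule prob_U)

lemma meas_U: "f \<in> borel_measurable borel \<Longrightarrow> f \<in> borel_measurable U"
  unfolding U_def by (rule measurable_restrict_space1) simp

lemma integrable_U:
  fixes f :: "real \<Rightarrow> 'b::{banach, second_countable_topology}"
  assumes "f \<in> borel_measurable borel" "\<And>x. x \<in> {0..1} \<Longrightarrow> norm (f x) \<le> B"
  shows "integrable U f"
  by (rule U.integrable_const_bound[where B=B]) (auto intro!: AE_I2 meas_U assms)

lemma int_U_ind:
  fixes f :: "real \<Rightarrow> real"
  shows "integral\<^sup>L U f = (\<integral>x. f x * indicator {0..1} x \<partial>lborel)"
  unfolding U_def by (subst integral_restrict_space) (auto simp: mult.commute)

lemma int_U_pow: "integral\<^sup>L U (\<lambda>x. x^k) = 1 / (real k + 1)"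
  unfolding int_U_ind using integral_power[of 0 1 k] by simp

lemma int_U_Icc:
  assumes "0 \<le> a" "a \<le> b" "b \<le> 1"
  shows "integral\<^sup>L U (\<lambda>y. if a \<le> y \<and> y \<le> b then 1 else 0) = b - a"
proof -
  have "(\<lambda>x. (if a \<le> x \<and> x \<le> b then 1 else 0) * indicator {0..1} x) = (\<lambda>x. x^0 * indicator {a..b} x :: real)"
    using assms by (auto simp: indicator_def fun_eq_iff)
  then show ?thesis unfolding int_U_ind using integral_power[of a b 0] assms by simp
qed

lemma int_U_le: "b \<in> {0..1} \<Longrightarrow> integral\<^sup>L U (\<lambda>y. if y \<le> b then 1 else 0::real) = b"
proof -
  assume b: "b \<in> {0..1}"
  have "integral\<^sup>L U (\<lambda>y. if y \<le> b then 1 else (0::real)) = integral\<^sup>L U (\<lambda>y. if 0 \<le> y \<and> y \<le> b then 1 else 0)"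
    by (rule Bochner_Integration.integral_cong) auto
  also have "\<dots> = b" using int_U_Icc[of 0 b] b by simp
  finally show ?thesis .
qed

lemma int_U_ge: "a \<in> {0..1} \<Longrightarrow> integral\<^sup>L U (\<lambda>y. if a \<le> y then 1 else 0::real) = 1 - a"
proof -
  assume a: "a \<in> {0..1}"
  have "integral\<^sup>L U (\<lambda>y. if a \<le> y then 1 else (0::real)) = integral\<^sup>L U (\<lambda>y. if a \<le> y \<and> y \<le> 1 then 1 else 0)"
    by (rule Bochner_Integration.integral_cong) auto
  also have "\<dots> = 1 - a" using int_U_Icc[of a 1] a by simp
  finally show ?thesis .
qed

lemma int_U_eq: "b \<in> {0..1} \<Longrightarrow> integral\<^sup>L U (\<lambda>y. if y = b then 1 else 0::real) = 0"
proof -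
  assume b: "b \<in> {0..1}"
  have "integral\<^sup>L U (\<lambda>y. if y = b then 1 else (0::real)) = integral\<^sup>L U (\<lambda>y. if b \<le> y \<and> y \<le> b then 1 else 0)"
    by (rule Bochner_Integration.integral_cong) auto
  also have "\<dots> = 0" using int_U_Icc[of b b] b by simp
  finally show ?thesis .
qed

lemma int_U_x: "integral\<^sup>L U (\<lambda>x. x) = 1/2"
  using int_U_pow[of 1] by simp

lemma measure_U1[simp]: "measure U {0..1} = 1"
  using U.prob_space space_U by metis

lemma int_U_const: "integral\<^sup>L U (\<lambda>x. c) = (c::real)"
  by (simp only: lebesgue_integral_const space_U measure_U1) simp

lemma int_hh1: assumes b: "b \<in> {0..1}" shows "integral\<^sup>L U (\<lambda>y. hh y b) = 0"
proof -
  have i1: "integrable U (\<lambda>y. if y \<le> b then 1 else 0 :: real)"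
    by (rule integrable_U[where B=1]) auto
  have i2: "integrable U (\<lambda>y. y)" by (rule integrable_U[where B=1]) auto
  have "integral\<^sup>L U (\<lambda>y. hh y b) = integral\<^sup>L U (\<lambda>y. if y \<le> b then 1 else 0) - b + integral\<^sup>L U (\<lambda>y. y) - 1/2"
    unfolding hh_def using i1 i2 
    by (simp add: Bochner_Integration.integral_diff Bochner_Integration.integral_add int_U_const)
  then show ?thesis using int_U_le[OF b] int_U_x by simp
qed

lemma int_hh2: assumes a: "a \<in> {0..1}" shows "integral\<^sup>L U (\<lambda>y. hh a y) = 0"
proof -
  have i1: "integrable U (\<lambda>y. if a \<le> y then 1 else 0 :: real)"
    by (rule integrable_U[where B=1]) auto
  have i2: "integrable U (\<lambda>y. y)" by (rule integrable_U[where B=1]) auto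
  have "integral\<^sup>L U (\<lambda>y. hh a y) = integral\<^sup>L U (\<lambda>y. if a \<le> y then 1 else 0) - integral\<^sup>L U (\<lambda>y. y) + a - 1/2"
    unfolding hh_def using i1 i2 
    by (simp add: Bochner_Integration.integral_diff Bochner_Integration.integral_add int_U_const)
  then show ?thesis using int_U_ge[OF a] int_U_x by simp
qed

lemma hh_bound: "\<lbrakk>a \<in> {0..1}; b \<in> {0..1}\<rbrakk> \<Longrightarrow> \<bar>hh a b\<bar> \<le> 3/2"
  unfolding hh_def by (auto simp: abs_if)

lemma comp_meas: "a \<in> {1..N} \<Longrightarrow> (\<lambda>x. x a) \<in> borel_measurable (PP N)"
proof -
  assume a: "a \<in> {1..N}"
  have "(\<lambda>x. x a) \<in> measurable (PP N) U" unfolding PP_def using a by (rule measurable_component_singleton)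
  then show ?thesis unfolding U_def measurable_restrict_space2_iff
    by (simp add: measurable_lborel2)
qed

lemma space_PP_range: "x \<in> space (PP N) \<Longrightarrow> a \<in> {1..N} \<Longrightarrow> x a \<in> {0..1}"
  unfolding PP_def space_PiM by auto

lemma hh_meas: "a \<in> {1..N} \<Longrightarrow> b \<in> {1..N} \<Longrightarrow> (\<lambda>x. hh (x a) (x b)) \<in> borel_measurable (PP N)"
proof -
  assume a: "a \<in> {1..N}" and b: "b \<in> {1..N}"
  note [measurable] = comp_meas[OF a] comp_meas[OF b]
  show ?thesis unfolding hh_def by measurable
qed

lemma int_out:
  fixes f :: "(nat \<Rightarrow> real) \<Rightarrow> real"
  assumes i: "i \<in> {1..N}" and f: "integrable (PP N) f"
    and z: "\<And>x. x \<in> space (PiM ({1..N} - {i}) (\<lambda>_. U)) \<Longrightarrow> integral\<^sup>L U (\<lambda>y. f (x(i:=y))) = 0"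
  shows "integral\<^sup>L (PP N) f = 0"
proof -
  have I: "insert i ({1..N} - {i}) = {1..N}" using i by blast
  have f': "integrable (PiM (insert i ({1..N} - {i})) (\<lambda>_. U)) f" unfolding I using f by (simp only: PP_def)
  have "integral\<^sup>L (PP N) f = integral\<^sup>L (PiM (insert i ({1..N} - {i})) (\<lambda>_. U)) f"
    unfolding I PP_def ..
  also have "\<dots> = (\<integral>x. (\<integral>y. f (x(i:=y)) \<partial>U) \<partial>PiM ({1..N} - {i}) (\<lambda>_. U))"
    by (rule PS.product_integral_insert[OF _ _ f']) auto
  also have "\<dots> = (\<integral>x. 0 \<partial>PiM ({1..N} - {i}) (\<lambda>_. U))"
    by (rule Bochner_Integration.integral_cong[OF refl z])
  finally show ?thesis by simp
qed



lemma integrable_PP: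
  fixes f :: "(nat \<Rightarrow> real) \<Rightarrow> 'b::{banach, second_countable_topology}"
  assumes "f \<in> borel_measurable (PP N)" "\<And>x. x \<in> space (PP N) \<Longrightarrow> norm (f x) \<le> B"
  shows "integrable (PP N) f"
proof -
  interpret P: prob_space "PP N" by (rule prob_PP)
  show ?thesis by (rule P.integrable_const_bound[where B=B]) (auto intro!: AE_I2 assms)
qed

lemma space_PiM_range: "x \<in> space (PiM J (\<lambda>_. U)) \<Longrightarrow> a \<in> J \<Longrightarrow> x a \<in> {0..1}"
  unfolding space_PiM by auto

definition HH :: "nat \<Rightarrow> nat \<Rightarrow> (nat \<Rightarrow> real) \<Rightarrow> real" where
  "HH a b x = hh (x a) (x b)"

lemma HH2_meas: "a \<in> {1..N} \<Longrightarrow> b \<in> {1..N} \<Longrightarrow> c \<in> {1..N} \<Longrightarrow> d \<in> {1..N} \<Longrightarrow>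
  (\<lambda>x. HH a b x * HH c d x) \<in> borel_measurable (PP N)"
  unfolding HH_def by (intro borel_measurable_times hh_meas)

lemma HH2_bound: "a \<in> {1..N} \<Longrightarrow> b \<in> {1..N} \<Longrightarrow> c \<in> {1..N} \<Longrightarrow> d \<in> {1..N} \<Longrightarrow>
   x \<in> space (PP N) \<Longrightarrow> \<bar>HH a b x * HH c d x\<bar> \<le> 9/4"
proof -
  assume as: "a \<in> {1..N}" "b \<in> {1..N}" "c \<in> {1..N}" "d \<in> {1..N}" "x \<in> space (PP N)"
  have "\<bar>HH a b x\<bar> \<le> 3/2" "\<bar>HH c d x\<bar> \<le> 3/2" unfolding HH_def
    using hh_bound[OF space_PP_range[OF as(5) as(1)] space_PP_range[OF as(5) as(2)]]
      hh_bound[OF space_PP_range[OF as(5) as(3)] space_PP_range[OF as(5) as(4)]] by auto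
  then have "\<bar>HH a b x\<bar> * \<bar>HH c d x\<bar> \<le> 3/2 * (3/2)" by (intro mult_mono) auto
  then show ?thesis by (simp add: abs_mult)
qed

lemma HH2_int: "a \<in> {1..N} \<Longrightarrow> b \<in> {1..N} \<Longrightarrow> c \<in> {1..N} \<Longrightarrow> d \<in> {1..N} \<Longrightarrow>
  integrable (PP N) (\<lambda>x. HH a b x * HH c d x)"
proof -
  assume as: "a \<in> {1..N}" "b \<in> {1..N}" "c \<in> {1..N}" "d \<in> {1..N}"
  show ?thesis
    by (rule integrable_PP[where B="9/4"]) (use HH2_meas[OF as] HH2_bound[OF as] in auto)
qed

lemma orth1:
  assumes I: "a \<in> {1..N}" "b \<in> {1..N}" "c \<in> {1..N}" "d \<in> {1..N}" and ab: "a \<noteq> b" "a \<noteq> c" "a \<noteq> d"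
  shows "integral\<^sup>L (PP N) (\<lambda>x. HH a b x * HH c d x) = 0"
proof (rule int_out[OF I(1) HH2_int[OF I]])
  fix x assume x: "x \<in> space (PiM ({1..N} - {a}) (\<lambda>_. U))"
  have xb: "x b \<in> {0..1}" using x I ab by (intro space_PiM_range) auto
  have "integral\<^sup>L U (\<lambda>y. HH a b (x(a:=y)) * HH c d (x(a:=y))) = integral\<^sup>L U (\<lambda>y. hh y (x b) * hh (x c) (x d))"
    using ab by (simp add: HH_def)
  also have "\<dots> = integral\<^sup>L U (\<lambda>y. hh y (x b)) * hh (x c) (x d)" by simp
  also have "\<dots> = 0" using int_hh1[OF xb] by simp
  finally show "integral\<^sup>L U (\<lambda>y. HH a b (x(a:=y)) * HH c d (x(a:=y))) = 0" .
qed

lemma orth2: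
  assumes I: "a \<in> {1..N}" "b \<in> {1..N}" "c \<in> {1..N}" "d \<in> {1..N}" and ab: "a \<noteq> b" "b \<noteq> c" "b \<noteq> d"
  shows "integral\<^sup>L (PP N) (\<lambda>x. HH a b x * HH c d x) = 0"
proof (rule int_out[OF I(2) HH2_int[OF I]])
  fix x assume x: "x \<in> space (PiM ({1..N} - {b}) (\<lambda>_. U))"
  have xa: "x a \<in> {0..1}" using x I ab by (intro space_PiM_range) auto
  have "integral\<^sup>L U (\<lambda>y. HH a b (x(b:=y)) * HH c d (x(b:=y))) = integral\<^sup>L U (\<lambda>y. hh (x a) y * hh (x c) (x d))"
    using ab by (simp add: HH_def)
  also have "\<dots> = integral\<^sup>L U (\<lambda>y. hh (x a) y) * hh (x c) (x d)" by simp
  also have "\<dots> = 0" using int_hh2[OF xa] by simp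
  finally show "integral\<^sup>L U (\<lambda>y. HH a b (x(b:=y)) * HH c d (x(b:=y))) = 0" .
qed

definition QQ :: "nat \<Rightarrow> (nat \<times> nat) set" where
  "QQ N = {p. fst p \<in> {1..N} \<and> snd p \<in> {1..N} \<and> fst p \<noteq> snd p}"

lemma finite_QQ: "finite (QQ N)"
  by (rule finite_subset[of _ "{1..N} \<times> {1..N}"]) (auto simp: QQ_def)

lemma card_QQ: "card (QQ N) \<le> N * N"
proof -
  have "card (QQ N) \<le> card ({1..N} \<times> {1..N})"
    by (rule card_mono) (auto simp: QQ_def)
  then show ?thesis by (simp add: card_cartesian_product)
qed

lemma orth:
  assumes p: "p \<in> QQ N" and q: "q \<in> QQ N" and ne: "q \<noteq> p" "q \<noteq> (snd p, fst p)"
  shows "integral\<^sup>L (PP N) (\<lambda>x. HH (fst p) (snd p) x * HH (fst q) (snd q) x) = 0"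
proof -
  obtain a b where pab: "p = (a, b)" by (cases p)
  obtain c d where qcd: "q = (c, d)" by (cases q)
  have I: "a \<in> {1..N}" "b \<in> {1..N}" "c \<in> {1..N}" "d \<in> {1..N}" "a \<noteq> b" "c \<noteq> d"
    using p q by (auto simp: QQ_def pab qcd)
  show ?thesis
  proof (cases "a \<noteq> c \<and> a \<noteq> d")
    case True then show ?thesis using orth1[OF I(1-4) I(5)] by (simp add: pab qcd)
  next
    case False
    show ?thesis
    proof (cases "b \<noteq> c \<and> b \<noteq> d")
      case True then show ?thesis using orth2[OF I(1-4) I(5)] by (simp add: pab qcd)
    next
      case False2: False
      have "q = p \<or> q = (snd p, fst p)" using False False2 I by (auto simp: pab qcd)
      then show ?thesis using ne by blast
    qed
  qed
qed

definition RR :: "nat \<Rightarrow> (nat \<Rightarrow> real) \<Rightarrow> (nat \<Rightarrow> real) \<Rightarrow> real" where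
  "RR N c x = (\<Sum>p\<in>QQ N. c (snd p) * HH (fst p) (snd p) x)"

lemma RR_meas: "RR N c \<in> borel_measurable (PP N)"
  unfolding RR_def HH_def
  by (intro borel_measurable_sum borel_measurable_times borel_measurable_const hh_meas) (auto simp: QQ_def)

lemma RR2_bound:
  assumes c: "\<And>j. j \<in> {1..N} \<Longrightarrow> \<bar>c j\<bar> \<le> 1"
  shows "integral\<^sup>L (PP N) (\<lambda>x. (RR N c x)^2) \<le> 9/2 * real N * real N"
proof -
  define g where "g p q = c (snd p) * c (snd q) * integral\<^sup>L (PP N) (\<lambda>x. HH (fst p) (snd p) x * HH (fst q) (snd q) x)" for p q
  have sq: "(RR N c x)^2 = (\<Sum>p\<in>QQ N. \<Sum>q\<in>QQ N. c (snd p) * c (snd q) * (HH (fst p) (snd p) x * HH (fst q) (snd q) x))" for x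
    unfolding RR_def power2_eq_square sum_product by (simp add: ac_simps)
  have intg: "p \<in> QQ N \<Longrightarrow> q \<in> QQ N \<Longrightarrow> integrable (PP N) (\<lambda>x. c (snd p) * c (snd q) * (HH (fst p) (snd p) x * HH (fst q) (snd q) x))" for p q
    by (intro integrable_mult_right HH2_int) (auto simp: QQ_def)
  have "integral\<^sup>L (PP N) (\<lambda>x. (RR N c x)^2) = (\<Sum>p\<in>QQ N. \<Sum>q\<in>QQ N. g p q)"
    unfolding sq g_def
  proof (subst Bochner_Integration.integral_sum)
    show "\<And>p. p \<in> QQ N \<Longrightarrow> integrable (PP N) (\<lambda>x. \<Sum>q\<in>QQ N. c (snd p) * c (snd q) * (HH (fst p) (snd p) x * HH (fst q) (snd q) x))"
      by (intro Bochner_Integration.integrable_sum intg)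
    show "(\<Sum>p\<in>QQ N. integral\<^sup>L (PP N) (\<lambda>x. \<Sum>q\<in>QQ N. c (snd p) * c (snd q) * (HH (fst p) (snd p) x * HH (fst q) (snd q) x))) =
      (\<Sum>p\<in>QQ N. \<Sum>q\<in>QQ N. c (snd p) * c (snd q) * integral\<^sup>L (PP N) (\<lambda>x. HH (fst p) (snd p) x * HH (fst q) (snd q) x))"
      by (intro sum.cong refl, subst Bochner_Integration.integral_sum) (auto intro: intg HH2_int simp: QQ_def)
  qed
  also have "\<dots> \<le> (\<Sum>p\<in>QQ N. 9/2)"
  proof (rule sum_mono)
    fix p assume p: "p \<in> QQ N"
    define S where "S = QQ N \<inter> {p, (snd p, fst p)}"
    have "(\<Sum>q\<in>QQ N. g p q) = (\<Sum>q\<in>S. g p q)"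
      by (rule sum.mono_neutral_right) (auto simp: S_def finite_QQ g_def intro!: orth p)
    also have "\<dots> \<le> (\<Sum>q\<in>S. 9/4)"
    proof (rule sum_mono)
      fix q assume q: "q \<in> S"
      then have qQ: "q \<in> QQ N" by (simp add: S_def)
      have cb: "\<bar>c (snd p) * c (snd q)\<bar> \<le> 1"
        using c p qQ by (auto simp: QQ_def abs_mult intro!: mult_le_one)
      have ib: "\<bar>integral\<^sup>L (PP N) (\<lambda>x. HH (fst p) (snd p) x * HH (fst q) (snd q) x)\<bar> \<le> 9/4"
      proof -
        interpret P: prob_space "PP N" by (rule prob_PP)
        have "\<bar>integral\<^sup>L (PP N) (\<lambda>x. HH (fst p) (snd p) x * HH (fst q) (snd q) x)\<bar>
            \<le> integral\<^sup>L (PP N) (\<lambda>x. \<bar>HH (fst p) (snd p) x * HH (fst q) (snd q) x\<bar>)"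
          by (rule integral_abs_bound)
        also have "\<dots> \<le> integral\<^sup>L (PP N) (\<lambda>x. 9/4)"
        proof (rule integral_mono)
          have pq: "fst p \<in> {1..N}" "snd p \<in> {1..N}" "fst q \<in> {1..N}" "snd q \<in> {1..N}"
            using p qQ by (auto simp: QQ_def)
          show "integrable (PP N) (\<lambda>x. \<bar>HH (fst p) (snd p) x * HH (fst q) (snd q) x\<bar>)"
            by (intro integrable_abs HH2_int pq)
          show "integrable (PP N) (\<lambda>x. 9/4::real)" by simp
          show "\<bar>HH (fst p) (snd p) x * HH (fst q) (snd q) x\<bar> \<le> 9/4" if "x \<in> space (PP N)" for x
            by (rule HH2_bound[OF pq that])
        qed
        also have "\<dots> = 9/4" by (simp add: P.prob_space)
        finally show ?thesis .
      qed
      have "g p q \<le> \<bar>g p q\<bar>" by simp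
      also have "\<dots> = \<bar>c (snd p) * c (snd q)\<bar> * \<bar>integral\<^sup>L (PP N) (\<lambda>x. HH (fst p) (snd p) x * HH (fst q) (snd q) x)\<bar>"
        by (simp add: g_def abs_mult)
      also have "\<dots> \<le> 1 * (9/4)" by (intro mult_mono cb ib) auto
      finally show "g p q \<le> 9/4" by simp
    qed
    also have "\<dots> = card S * (9/4)" by simp
    also have "\<dots> \<le> 2 * (9/4)"
    proof -
      have "card S \<le> card {p, (snd p, fst p)}" by (rule card_mono) (auto simp: S_def)
      also have "\<dots> \<le> 2" by (rule card_insert_le_m1) auto
      finally show ?thesis by simp
    qed
    finally show "(\<Sum>q\<in>QQ N. g p q) \<le> 9/2" by simp
  qed
  also have "\<dots> = card (QQ N) * (9/2)" by simp
  also have "\<dots> \<le> real (N * N) * (9/2)"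
    using card_QQ[of N] by (intro mult_right_mono) (auto simp del: of_nat_mult)
  finally show ?thesis by simp
qed



definition rk :: "nat \<Rightarrow> (nat \<Rightarrow> real) \<Rightarrow> nat \<Rightarrow> nat" where
  "rk N u j = (if j \<in> {1..N} then (\<Sum>k\<in>{1..N}. if u k \<le> u j then 1 else 0) else j)"

definition LL :: "nat \<Rightarrow> (nat \<Rightarrow> real) \<Rightarrow> (nat \<Rightarrow> real) \<Rightarrow> real" where
  "LL N c u = (\<Sum>m\<in>{1..N}. real N * (c m - pbar c N) * (u m - 1/2))"

lemma sum_if_ne:
  fixes g :: "'a \<Rightarrow> real"
  assumes "finite A" "j \<in> A"
  shows "(\<Sum>k\<in>A. if k = j then 0 else g k) = (\<Sum>k\<in>A. g k) - g j"
proof -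
  have "(\<Sum>k\<in>A. g k) = (\<Sum>k\<in>A. (if k = j then g k else 0) + (if k = j then 0 else g k))"
    by (rule sum.cong) auto
  also have "\<dots> = g j + (\<Sum>k\<in>A. if k = j then 0 else g k)"
    using assms by (simp add: sum.distrib)
  finally show ?thesis by simp
qed

lemma sum_QQ:
  "(\<Sum>p\<in>QQ N. f p) = (\<Sum>a\<in>{1..N}. \<Sum>b\<in>{1..N}. if a = b then 0 else f (a, b))"
proof -
  have "(\<Sum>p\<in>QQ N. f p) = (\<Sum>p\<in>{1..N} \<times> {1..N}. if fst p = snd p then 0 else f p)"
    by (rule sum.mono_neutral_cong_left) (auto simp: QQ_def)
  also have "\<dots> = (\<Sum>a\<in>{1..N}. \<Sum>b\<in>{1..N}. if a = b then 0 else f (a, b))"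
    by (simp add: sum.cartesian_product case_prod_beta cong: if_cong)
  finally show ?thesis .
qed

lemma centered_decomp:
  "centered c (rk N u) N = LL N c u + RR N c u"
proof -
  define I where "I = {1..N}"
  define S where "S = (\<Sum>j\<in>I. c j)"
  define W where "W = (\<Sum>j\<in>I. c j * u j)"
  define V where "V = (\<Sum>j\<in>I. u j)"
  have fI: "finite I" by (simp add: I_def)
  have cI: "card I = N" by (simp add: I_def)
  have ind: "c j * (if u k \<le> u j then 1 else 0 :: real) = c j * (if k = j then 1 else 0) + (if k = j then 0 else c j * (1/2 + u j - u k))
      + (if k = j then 0 else c j * hh (u k) (u j))" for j k
    by (auto simp: hh_def algebra_simps)
  have "Rstar c (rk N u) N = (\<Sum>j\<in>I. \<Sum>k\<in>I. c j * (if u k \<le> u j then 1 else 0))"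
    unfolding Rstar_def rk_def I_def by (auto intro!: sum.cong simp: sum_distrib_left of_nat_sum[symmetric] if_distrib)
  also have "\<dots> = (\<Sum>j\<in>I. \<Sum>k\<in>I. c j * (if k = j then 1 else 0))
      + (\<Sum>j\<in>I. \<Sum>k\<in>I. if k = j then 0 else c j * (1/2 + u j - u k))
      + (\<Sum>j\<in>I. \<Sum>k\<in>I. if k = j then 0 else c j * hh (u k) (u j))"
    unfolding ind by (simp add: sum.distrib)
  also have "(\<Sum>j\<in>I. \<Sum>k\<in>I. c j * (if k = j then 1 else 0)) = S"
    unfolding S_def using fI by (intro sum.cong refl) (simp add: sum_distrib_left[symmetric])
  also have "(\<Sum>j\<in>I. \<Sum>k\<in>I. if k = j then 0 else c j * (1/2 + u j - u k))
      = (\<Sum>j\<in>I. c j * (real N / 2 + real N * u j - V) - c j / 2)"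
  proof (rule sum.cong[OF refl])
    fix j assume j: "j \<in> I"
    have "(\<Sum>k\<in>I. if k = j then 0 else c j * (1/2 + u j - u k)) = (\<Sum>k\<in>I. c j * (1/2 + u j - u k)) - c j / 2"
      by (subst sum_if_ne[OF fI j]) simp
    also have "(\<Sum>k\<in>I. c j * (1/2 + u j - u k)) = c j * (real N / 2 + real N * u j - V)"
      unfolding V_def sum_distrib_left[symmetric] using cI
      by (simp add: sum_subtractf sum.distrib algebra_simps)
    finally show "(\<Sum>k\<in>I. if k = j then 0 else c j * (1/2 + u j - u k)) = c j * (real N / 2 + real N * u j - V) - c j / 2" .
  qed
  also have "\<dots> = real N / 2 * S + real N * W - S * V - S / 2"
    unfolding S_def W_def by (simp add: sum_subtractf sum.distrib algebra_simps sum_distrib_left sum_distrib_right sum_divide_distrib)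
  also have "(\<Sum>j\<in>I. \<Sum>k\<in>I. if k = j then 0 else c j * hh (u k) (u j)) = RR N c u"
    unfolding RR_def HH_def sum_QQ I_def by (subst sum.swap) (auto intro!: sum.cong)
  finally have Rs: "Rstar c (rk N u) N = S + (real N / 2 * S + real N * W - S * V - S / 2) + RR N c u" .
  have LLe: "LL N c u = real N * W - S * V"
  proof (cases "N = 0")
    case True then show ?thesis by (simp add: LL_def W_def S_def V_def I_def)
  next
    case False
    have pb: "pbar c N = S / real N" by (simp add: pbar_def S_def I_def)
    have "LL N c u = (\<Sum>m\<in>I. real N * (c m * u m) - real N / 2 * c m - S * u m + S / 2)"
      unfolding LL_def pb I_def[symmetric] using False by (intro sum.cong refl) (simp add: field_simps)
    also have "\<dots> = real N * W - real N / 2 * S - S * V + real N * S / 2"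
      unfolding W_def S_def V_def using cI by (simp add: sum_subtractf sum.distrib sum_distrib_left)
    finally show ?thesis by simp
  qed
  show ?thesis unfolding centered_def Rs LLe S_def[symmetric] I_def[symmetric] by (simp add: S_def I_def field_simps)
qed



definition Perms :: "nat \<Rightarrow> (nat \<Rightarrow> nat) set" where
  "Perms N = {\<sigma>. \<sigma> permutes {1..N}}"

lemma finite_Perms: "finite (Perms N)"
  unfolding Perms_def by (rule finite_permutations) simp

lemma card_Perms: "card (Perms N) = fact N"
  unfolding Perms_def using card_permutations[of "{1..N}" N] by simp

lemma Perms_ne: "Perms N \<noteq> {}"
  unfolding Perms_def using permutes_id by blast

lemma rk_out: "j \<notin> {1..N} \<Longrightarrow> rk N u j = j"
  unfolding rk_def by (rule if_not_P)

lemma rk_in_Perms: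
  assumes inj: "inj_on u {1..N}"
  shows "rk N u \<in> Perms N"
proof -
  let ?I = "{1..N}"
  have range: "rk N u j \<in> ?I" if j: "j \<in> ?I" for j
  proof -
    have "(if u j \<le> u j then 1 else 0::nat) \<le> (\<Sum>k\<in>?I. if u k \<le> u j then 1 else 0)"
      by (rule member_le_sum[OF j]) auto
    moreover have "(\<Sum>k\<in>?I. if u k \<le> u j then 1 else 0::nat) \<le> (\<Sum>k\<in>?I. 1)"
      by (rule sum_mono) auto
    ultimately show ?thesis using j by (simp add: rk_def)
  qed
  have lt: "rk N u j < rk N u k" if j: "j \<in> ?I" and k: "k \<in> ?I" and ujk: "u j < u k" for j k
  proof -
    have "(\<Sum>l\<in>?I. if u l \<le> u j then 1 else 0::nat) < (\<Sum>l\<in>?I. if u l \<le> u k then 1 else 0)"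
    proof (rule sum_strict_mono_ex1)
      show "\<forall>l\<in>?I. (if u l \<le> u j then 1 else 0::nat) \<le> (if u l \<le> u k then 1 else 0)" using ujk by auto
      show "\<exists>l\<in>?I. (if u l \<le> u j then 1 else 0::nat) < (if u l \<le> u k then 1 else 0)"
        using ujk k by (intro bexI[of _ k]) auto
    qed simp
    then show ?thesis using j k by (simp add: rk_def)
  qed
  have injr: "inj_on (rk N u) ?I"
  proof (rule inj_onI)
    fix j k assume j: "j \<in> ?I" and k: "k \<in> ?I" and e: "rk N u j = rk N u k"
    show "j = k"
    proof (rule ccontr)
      assume "j \<noteq> k"
      then have "u j \<noteq> u k" using inj j k by (auto dest: inj_onD)
      then have "u j < u k \<or> u k < u j" by auto
      then show False using lt[OF j k] lt[OF k j] e by auto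
    qed
  qed
  have img: "rk N u ` ?I = ?I"
  proof (rule card_subset_eq)
    show "rk N u ` ?I \<subseteq> ?I" using range by auto
    show "card (rk N u ` ?I) = card ?I" using card_image[OF injr] .
  qed simp
  have b: "bij_betw (rk N u) ?I ?I" using injr img by (simp add: bij_betw_def)
  show ?thesis unfolding Perms_def using bij_imp_permutes[OF b rk_out] by simp
qed

lemma ind_meas:
  assumes a: "a \<in> {1..N}" and b: "b \<in> {1..N}"
  shows "(\<lambda>x. if x a \<le> x b then 1 else 0::real) \<in> borel_measurable (PP N)"
proof -
  note [measurable] = comp_meas[OF a] comp_meas[OF b]
  show ?thesis by measurable
qed

lemma eqind_meas:
  assumes a: "a \<in> {1..N}" and b: "b \<in> {1..N}"
  shows "(\<lambda>x. if x a = x b then 1 else 0::real) \<in> borel_measurable (PP N)"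
proof -
  note [measurable] = comp_meas[OF a] comp_meas[OF b]
  show ?thesis by measurable
qed

lemma AE_ne:
  assumes ab: "(a, b) \<in> QQ N"
  shows "AE x in PP N. x a \<noteq> x b"
proof -
  interpret P: prob_space "PP N" by (rule prob_PP)
  have a: "a \<in> {1..N}" and b: "b \<in> {1..N}" and ne: "a \<noteq> b" using ab by (auto simp: QQ_def)
  let ?f = "\<lambda>x. if x a = x b then 1 else 0::real"
  have intf: "integrable (PP N) ?f"
    by (rule integrable_PP[where B=1]) (auto intro: eqind_meas[OF a b])
  have "integral\<^sup>L (PP N) ?f = 0"
  proof (rule int_out[OF a intf])
    fix x assume x: "x \<in> space (PiM ({1..N} - {a}) (\<lambda>_. U))"
    have xb: "x b \<in> {0..1}" using x b ne by (intro space_PiM_range) auto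
    have "integral\<^sup>L U (\<lambda>y. ?f (x(a:=y))) = integral\<^sup>L U (\<lambda>y. if y = x b then 1 else 0::real)"
      using ne by simp
    also have "\<dots> = 0" by (rule int_U_eq[OF xb])
    finally show "integral\<^sup>L U (\<lambda>y. ?f (x(a:=y))) = 0" .
  qed
  then have "AE x in PP N. ?f x = 0"
    using integral_nonneg_eq_0_iff_AE[OF intf] by auto
  then show ?thesis by eventually_elim (auto split: if_splits)
qed

lemma AE_inj: "AE x in PP N. inj_on x {1..N}"
proof -
  have "AE x in PP N. \<forall>p\<in>QQ N. x (fst p) \<noteq> x (snd p)"
    by (rule AE_finite_allI[OF finite_QQ]) (auto intro: AE_ne)
  then show ?thesis
  proof eventually_elim
    case (elim x)
    show ?case
    proof (rule inj_onI)
      fix a b assume "a \<in> {1..N}" "b \<in> {1..N}" "x a = x b"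
      then show "a = b" using elim[rule_format, of "(a, b)"] by (auto simp: QQ_def)
    qed
  qed
qed

definition AS :: "nat \<Rightarrow> (nat \<Rightarrow> nat) \<Rightarrow> (nat \<Rightarrow> real) set" where
  "AS N \<sigma> = {u \<in> space (PP N). rk N u = \<sigma>}"

definition gsum :: "nat \<Rightarrow> nat \<Rightarrow> (nat \<Rightarrow> real) \<Rightarrow> real" where
  "gsum N j u = (\<Sum>k\<in>{1..N}. if u k \<le> u j then 1 else 0)"

lemma gsum_meas: "j \<in> {1..N} \<Longrightarrow> gsum N j \<in> borel_measurable (PP N)"
  unfolding gsum_def by (intro borel_measurable_sum ind_meas) auto

lemma gsum_rk: "j \<in> {1..N} \<Longrightarrow> gsum N j u = real (rk N u j)"
  by (simp add: gsum_def rk_def of_nat_sum if_distrib cong: if_cong)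

lemma AS_sets:
  assumes s: "\<sigma> \<in> Perms N"
  shows "AS N \<sigma> \<in> sets (PP N)"
proof -
  have "AS N \<sigma> = {u\<in>space (PP N). \<forall>j\<in>{1..N}. gsum N j u = real (\<sigma> j)}"
  proof -
    have "rk N u = \<sigma> \<longleftrightarrow> (\<forall>j\<in>{1..N}. gsum N j u = real (\<sigma> j))" for u
    proof
      assume "rk N u = \<sigma>" then show "\<forall>j\<in>{1..N}. gsum N j u = real (\<sigma> j)" by (simp add: gsum_rk)
    next
      assume h: "\<forall>j\<in>{1..N}. gsum N j u = real (\<sigma> j)"
      show "rk N u = \<sigma>"
      proof
        fix j show "rk N u j = \<sigma> j"
        proof (cases "j \<in> {1..N}")
          case True then show ?thesis using h gsum_rk[OF True, of u] by auto
        next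
          case False
          have "\<sigma> j = j" using s False unfolding Perms_def by (simp add: permutes_not_in)
          then show ?thesis using rk_out[OF False, of u] by simp
        qed
      qed
    qed
    then show ?thesis unfolding AS_def by auto
  qed
  also have "\<dots> \<in> sets (PP N)"
  proof (rule sets.sets_Collect_finite_All)
    fix j assume j: "j \<in> {1..N}"
    have "{u\<in>space (PP N). gsum N j u = real (\<sigma> j)} = gsum N j -` {real (\<sigma> j)} \<inter> space (PP N)" by auto
    also have "\<dots> \<in> sets (PP N)" by (rule measurable_sets[OF gsum_meas[OF j]]) simp
    finally show "{u\<in>space (PP N). gsum N j u = real (\<sigma> j)} \<in> sets (PP N)" .
  qed simp
  finally show ?thesis .
qed



lemma rk_shift:
  assumes t: "\<tau> permutes {1..N}"
  shows "rk N (\<lambda>n\<in>{1..N}. u (\<tau> n)) = rk N u \<circ> \<tau>"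
proof
  fix j
  show "rk N (\<lambda>n\<in>{1..N}. u (\<tau> n)) j = (rk N u \<circ> \<tau>) j"
  proof (cases "j \<in> {1..N}")
    case True
    have tj: "\<tau> j \<in> {1..N}" using True permutes_in_image[OF t] by simp
    have "rk N (\<lambda>n\<in>{1..N}. u (\<tau> n)) j = (\<Sum>k\<in>{1..N}. if u (\<tau> k) \<le> u (\<tau> j) then 1 else 0)"
      using True by (simp add: rk_def)
    also have "\<dots> = (\<Sum>k\<in>{1..N}. if u k \<le> u (\<tau> j) then 1 else 0)"
      using sum.reindex_bij_betw[OF permutes_imp_bij[OF t], of "\<lambda>k. if u k \<le> u (\<tau> j) then 1 else (0::nat)"] by simp
    also have "\<dots> = rk N u (\<tau> j)" using tj by (simp add: rk_def)
    finally show ?thesis by simp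
  next
    case False
    have "\<tau> j = j" using permutes_not_in[OF t False] .
    then show ?thesis using False by (simp add: rk_out)
  qed
qed

lemma comp_perm_cancel:
  assumes t: "\<tau> permutes S"
  shows "(f \<circ> \<tau> = g \<circ> \<tau>) \<longleftrightarrow> f = g"
proof
  assume "f \<circ> \<tau> = g \<circ> \<tau>"
  then have "f \<circ> \<tau> \<circ> inv \<tau> = g \<circ> \<tau> \<circ> inv \<tau>" by simp
  then show "f = g" by (simp add: o_assoc[symmetric] permutes_inv_o[OF t])
qed simp

lemma AS_shift:
  assumes s: "\<sigma> \<in> Perms N" and t: "\<tau> \<in> Perms N"
  shows "measure (PP N) (AS N (\<sigma> \<circ> \<tau>)) = measure (PP N) (AS N \<sigma>)"
proof -
  let ?I = "{1..N}"
  define sh where "sh u = (\<lambda>n\<in>?I. u (\<tau> n))" for u :: "nat \<Rightarrow> real"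
  have tp: "\<tau> permutes ?I" using t by (simp add: Perms_def)
  have st: "\<sigma> \<circ> \<tau> \<in> Perms N" using s tp by (simp add: Perms_def permutes_compose)
  have shm: "sh \<in> measurable (PP N) (PP N)"
    unfolding sh_def PP_def
    by (rule measurable_restrict, rule measurable_component_singleton) (use permutes_in_image[OF tp] in auto)
  have dist: "distr (PP N) (PP N) sh = PP N"
    unfolding PP_def sh_def
    using distr_PiM_reindex[of ?I "\<lambda>_. U" \<tau> ?I] prob_U permutes_inj_on[OF tp] permutes_in_image[OF tp]
    by auto
  have "measure (PP N) (AS N (\<sigma> \<circ> \<tau>)) = measure (distr (PP N) (PP N) sh) (AS N (\<sigma> \<circ> \<tau>))"
    by (simp add: dist)
  also have "\<dots> = measure (PP N) (sh -` AS N (\<sigma> \<circ> \<tau>) \<inter> space (PP N))"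
    by (rule measure_distr[OF shm AS_sets[OF st]])
  also have "sh -` AS N (\<sigma> \<circ> \<tau>) \<inter> space (PP N) = AS N \<sigma>"
  proof -
    have "u \<in> space (PP N) \<Longrightarrow> sh u \<in> space (PP N)" for u using measurable_space[OF shm] by blast
    moreover have "rk N (sh u) = \<sigma> \<circ> \<tau> \<longleftrightarrow> rk N u = \<sigma>" for u
      unfolding sh_def rk_shift[OF tp] using comp_perm_cancel[OF tp] by blast
    ultimately show ?thesis unfolding AS_def by auto
  qed
  finally show ?thesis .
qed

lemma AS_disj: "\<sigma> \<noteq> \<sigma>' \<Longrightarrow> AS N \<sigma> \<inter> AS N \<sigma>' = {}"
  unfolding AS_def by auto

lemma int_rk:
  fixes g :: "(nat \<Rightarrow> nat) \<Rightarrow> 'b::{banach, second_countable_topology}"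
  assumes gm: "(\<lambda>u. g (rk N u)) \<in> borel_measurable (PP N)"
  shows "integral\<^sup>L (PP N) (\<lambda>u. g (rk N u)) = (\<Sum>\<sigma>\<in>Perms N. measure (PP N) (AS N \<sigma>) *\<^sub>R g \<sigma>)"
proof -
  interpret P: prob_space "PP N" by (rule prob_PP)
  have "integral\<^sup>L (PP N) (\<lambda>u. g (rk N u)) = integral\<^sup>L (PP N) (\<lambda>u. \<Sum>\<sigma>\<in>Perms N. indicator (AS N \<sigma>) u *\<^sub>R g \<sigma>)"
  proof (rule integral_cong_AE[OF gm])
    show "(\<lambda>u. \<Sum>\<sigma>\<in>Perms N. indicator (AS N \<sigma>) u *\<^sub>R g \<sigma>) \<in> borel_measurable (PP N)"
      by (intro borel_measurable_sum borel_measurable_scaleR borel_measurable_indicator borel_measurable_const AS_sets)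
    show "AE x in PP N. g (rk N x) = (\<Sum>\<sigma>\<in>Perms N. indicator (AS N \<sigma>) x *\<^sub>R g \<sigma>)"
      using AE_inj[of N] AE_space
    proof eventually_elim
      case (elim x)
      have r: "rk N x \<in> Perms N" using rk_in_Perms[OF elim(1)] .
      have "(\<Sum>\<sigma>\<in>Perms N. indicator (AS N \<sigma>) x *\<^sub>R g \<sigma>) = (\<Sum>\<sigma>\<in>Perms N. if rk N x = \<sigma> then g \<sigma> else 0)"
        using elim(2) by (intro sum.cong refl) (auto simp: AS_def indicator_def)
      also have "\<dots> = g (rk N x)" using r finite_Perms[of N] by (simp add: sum.delta)
      finally show ?case by simp
    qed
  qed
  also have "\<dots> = (\<Sum>\<sigma>\<in>Perms N. integral\<^sup>L (PP N) (\<lambda>u. indicator (AS N \<sigma>) u *\<^sub>R g \<sigma>))"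
    by (rule Bochner_Integration.integral_sum) (auto intro!: integrable_scaleR_left integrable_real_indicator AS_sets simp: P.emeasure_eq_measure)
  also have "\<dots> = (\<Sum>\<sigma>\<in>Perms N. measure (PP N) (AS N \<sigma>) *\<^sub>R g \<sigma>)"
  proof (rule sum.cong[OF refl])
    fix \<sigma> assume s: "\<sigma> \<in> Perms N"
    have "AS N \<sigma> \<inter> space (PP N) = AS N \<sigma>" by (auto simp: AS_def)
    then show "integral\<^sup>L (PP N) (\<lambda>u. indicator (AS N \<sigma>) u *\<^sub>R g \<sigma>) = measure (PP N) (AS N \<sigma>) *\<^sub>R g \<sigma>"
      using s by (subst integral_scaleR_left) (auto intro!: integrable_real_indicator AS_sets simp: P.emeasure_eq_measure)
  qed
  finally show ?thesis .
qed

lemma measure_AS: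
  assumes s: "\<sigma> \<in> Perms N"
  shows "measure (PP N) (AS N \<sigma>) = 1 / fact N"
proof -
  interpret P: prob_space "PP N" by (rule prob_PP)
  have c: "measure (PP N) (AS N \<tau>) = measure (PP N) (AS N id)" if t: "\<tau> \<in> Perms N" for \<tau>
    using AS_shift[OF _ t, of id] by (simp add: Perms_def)
  have "integral\<^sup>L (PP N) (\<lambda>u. (\<lambda>_. 1::real) (rk N u)) = (\<Sum>\<sigma>\<in>Perms N. measure (PP N) (AS N \<sigma>) *\<^sub>R 1)"
    by (rule int_rk) simp
  then have "1 = (\<Sum>\<sigma>\<in>Perms N. measure (PP N) (AS N id))"
    using c by (simp add: P.prob_space)
  then have "1 = fact N * measure (PP N) (AS N id)" by (simp add: card_Perms)
  then show ?thesis using c[OF s] by (simp add: field_simps)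
qed

lemma rank_law_eq:
  fixes g :: "(nat \<Rightarrow> nat) \<Rightarrow> 'b::{banach, second_countable_topology}"
  assumes gm: "(\<lambda>u. g (rk N u)) \<in> borel_measurable (PP N)"
  shows "integral\<^sup>L (rank_law N) g = integral\<^sup>L (PP N) (\<lambda>u. g (rk N u))"
proof -
  have R: "rank_law N = measure_pmf (pmf_of_set (Perms N))" by (simp add: rank_law_def Perms_def)
  have "integral\<^sup>L (rank_law N) g = (\<Sum>\<sigma>\<in>Perms N. pmf (pmf_of_set (Perms N)) \<sigma> *\<^sub>R g \<sigma>)"
    unfolding R by (rule integral_measure_pmf[OF finite_Perms]) (simp add: finite_Perms Perms_ne)
  also have "\<dots> = (\<Sum>\<sigma>\<in>Perms N. measure (PP N) (AS N \<sigma>) *\<^sub>R g \<sigma>)"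
    by (intro sum.cong refl) (simp add: finite_Perms Perms_ne measure_AS card_Perms)
  also have "\<dots> = integral\<^sup>L (PP N) (\<lambda>u. g (rk N u))" by (rule int_rk[OF gm, symmetric])
  finally show ?thesis .
qed



lemma exp_neg_bound:
  fixes z :: real assumes z: "0 \<le> z"
  shows "\<bar>exp (- z) - (1 - z)\<bar> \<le> z^2 / 2"
proof -
  have lo: "1 - z \<le> exp (- z)" using exp_ge_add_one_self[of "-z"] by simp
  have "(\<lambda>x. 1 - x + x^2/2 - exp (-x)) 0 \<le> (\<lambda>x. 1 - x + x^2/2 - exp (-x)) z"
  proof (rule DERIV_nonneg_imp_nondecreasing[OF z])
    fix x :: real assume "0 \<le> x" "x \<le> z"
    have "DERIV (\<lambda>x. 1 - x + x^2/2 - exp (-x)) x :> (- 1 + x + exp (-x))"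
      by (auto intro!: derivative_eq_intros)
    moreover have "- 1 + x + exp (-x) \<ge> 0" using exp_ge_add_one_self[of "-x"] by simp
    ultimately show "\<exists>y. DERIV (\<lambda>x. 1 - x + x^2/2 - exp (-x)) x :> y \<and> y \<ge> 0" by blast
  qed
  then have up: "exp (- z) \<le> 1 - z + z^2/2" by simp
  show ?thesis using lo up by (simp add: abs_if)
qed

lemma integrable_U_cont:
  fixes f :: "real \<Rightarrow> 'b::{banach, second_countable_topology}"
  assumes "continuous_on {0..1} f"
  shows "integrable U f"
  unfolding U_def by (subst integrable_restrict_space) (auto intro!: borel_integrable_compact assms)

lemma iexp_meas[measurable]: "(\<lambda>y. iexp (w * (y - 1/2))) \<in> borel_measurable borel"
  by (intro borel_measurable_continuous_onI continuous_intros)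

lemma int_U_c1: "integral\<^sup>L U (\<lambda>y. y - 1/2) = 0"
proof -
  have "integral\<^sup>L U (\<lambda>y. y - 1/2) = integral\<^sup>L U (\<lambda>y. y) - integral\<^sup>L U (\<lambda>y. 1/2::real)"
    by (rule Bochner_Integration.integral_diff) (auto intro!: integrable_U_cont continuous_intros)
  then show ?thesis by (simp add: int_U_x int_U_const)
qed

lemma int_U_c2: "integral\<^sup>L U (\<lambda>y. (y - 1/2)^2) = 1/12"
proof -
  have e: "(\<lambda>y::real. (y - 1/2)^2) = (\<lambda>y. y^2 - y + 1/4)" by (auto simp: power2_eq_square field_simps)
  have i1: "integrable U (\<lambda>y::real. y^2)" by (auto intro!: integrable_U_cont continuous_intros)
  have i2: "integrable U (\<lambda>y::real. y)" by (auto intro!: integrable_U_cont continuous_intros)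
  have "integral\<^sup>L U (\<lambda>y. y^2 - y + 1/4) = integral\<^sup>L U (\<lambda>y. y^2) - integral\<^sup>L U (\<lambda>y. y) + 1/4"
    using i1 i2 by (simp add: Bochner_Integration.integral_diff Bochner_Integration.integral_add int_U_const)
  then show ?thesis unfolding e using int_U_pow[of 2] int_U_x by simp
qed

definition phi :: "real \<Rightarrow> complex" where
  "phi w = integral\<^sup>L U (\<lambda>y. iexp (w * (y - 1/2)))"

lemma integrable_iexpU: "integrable U (\<lambda>y. iexp (w * (y - 1/2)))"
  by (auto intro!: integrable_U_cont continuous_intros)

lemma norm_phi: "norm (phi w) \<le> 1"
proof -
  have "norm (phi w) \<le> integral\<^sup>L U (\<lambda>y. norm (iexp (w * (y - 1/2))))"
    unfolding phi_def by (rule integral_norm_bound)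
  also have "\<dots> = 1" by (simp add: norm_exp_i_times int_U_const)
  finally show ?thesis .
qed

lemma phi_approx: "norm (phi w - (1 - w^2/24)) \<le> \<bar>w\<bar>^3 / 48"
proof -
  define P where "P y = complex_of_real (1 - (w * (y - 1/2))^2 / 2) + \<i> * complex_of_real (w * (y - 1/2))" for y
  have iP1: "integrable U (\<lambda>y. 1 - (w * (y - 1/2))^2 / 2)"
    by (auto intro!: integrable_U_cont continuous_intros)
  have iP2: "integrable U (\<lambda>y. w * (y - 1/2))"
    by (auto intro!: integrable_U_cont continuous_intros)
  have iP: "integrable U P"
    unfolding P_def by (auto intro!: integrable_U_cont continuous_intros)
  have intP: "integral\<^sup>L U P = 1 - w^2/24"
  proof -
    have "integral\<^sup>L U P = complex_of_real (integral\<^sup>L U (\<lambda>y. 1 - (w * (y - 1/2))^2 / 2))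
        + \<i> * complex_of_real (integral\<^sup>L U (\<lambda>y. w * (y - 1/2)))"
    proof -
      have "integral\<^sup>L U P = integral\<^sup>L U (\<lambda>y. complex_of_real (1 - (w * (y - 1/2))^2 / 2))
          + integral\<^sup>L U (\<lambda>y. \<i> * complex_of_real (w * (y - 1/2)))"
        unfolding P_def
        by (rule Bochner_Integration.integral_add) (auto intro!: integrable_U_cont continuous_intros)
      also have "\<dots> = complex_of_real (integral\<^sup>L U (\<lambda>y. 1 - (w * (y - 1/2))^2 / 2))
          + \<i> * complex_of_real (integral\<^sup>L U (\<lambda>y. w * (y - 1/2)))"
        by (simp only: integral_complex_of_real integral_mult_right_zero)
      finally show ?thesis .
    qed
    also have "integral\<^sup>L U (\<lambda>y. 1 - (w * (y - 1/2))^2 / 2) = 1 - w^2 / 2 * integral\<^sup>L U (\<lambda>y. (y - 1/2)^2)"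
    proof -
      have i3: "integrable U (\<lambda>y::real. (y - 1/2)^2)" by (auto intro!: integrable_U_cont continuous_intros)
      have "integral\<^sup>L U (\<lambda>y. 1 - (w * (y - 1/2))^2 / 2) = integral\<^sup>L U (\<lambda>y. 1 - w^2/2 * (y - 1/2)^2)"
        by (simp add: power_mult_distrib)
      also have "\<dots> = 1 - w^2/2 * integral\<^sup>L U (\<lambda>y. (y - 1/2)^2)"
        using i3 by (simp add: Bochner_Integration.integral_diff int_U_const)
      finally show ?thesis .
    qed
    also have "integral\<^sup>L U (\<lambda>y. w * (y - 1/2)) = 0" using int_U_c1 by simp
    finally show ?thesis using int_U_c2 by simp
  qed
  have "phi w - (1 - w^2/24) = integral\<^sup>L U (\<lambda>y. iexp (w * (y - 1/2)) - P y)"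
    unfolding phi_def intP[symmetric]
    by (rule Bochner_Integration.integral_diff[symmetric, OF integrable_iexpU iP])
  also have "norm \<dots> \<le> integral\<^sup>L U (\<lambda>y. norm (iexp (w * (y - 1/2)) - P y))"
    by (rule integral_norm_bound)
  also have "\<dots> \<le> integral\<^sup>L U (\<lambda>y. \<bar>w\<bar>^3 / 48)"
  proof (rule integral_mono)
    show "integrable U (\<lambda>y. norm (iexp (w * (y - 1/2)) - P y))"
      by (intro integrable_norm Bochner_Integration.integrable_diff integrable_iexpU iP)
    show "integrable U (\<lambda>y. \<bar>w\<bar>^3 / 48)" by simp
    fix y assume y: "y \<in> space U"
    have "norm (iexp (w * (y - 1/2)) - P y) \<le> \<bar>w * (y - 1/2)\<bar>^3 / 6"
    proof -
      have "(\<Sum>k\<le>2. (\<i> * complex_of_real (w * (y - 1/2)))^k / fact k) = P y"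
        by (simp add: P_def numeral_2_eq_2 power2_eq_square field_simps)
      then show ?thesis using iexp_approx1[of "w * (y - 1/2)" 2] by (simp add: numeral_3_eq_3)
    qed
    also have "\<dots> \<le> \<bar>w\<bar>^3 / 48"
    proof -
      have "\<bar>y - 1/2\<bar> \<le> 1/2" using y by (auto simp: abs_if)
      then have "\<bar>w\<bar> * \<bar>y - 1/2\<bar> \<le> \<bar>w\<bar> * (1/2)" by (intro mult_left_mono) auto
      then have "\<bar>w * (y - 1/2)\<bar> \<le> \<bar>w\<bar> / 2" by (simp add: abs_mult)
      then have "\<bar>w * (y - 1/2)\<bar>^3 \<le> (\<bar>w\<bar> / 2)^3" by (rule power_mono) simp
      then show ?thesis by (simp add: power_divide)
    qed
    finally show "norm (iexp (w * (y - 1/2)) - P y) \<le> \<bar>w\<bar>^3 / 48" .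
  qed
  also have "\<dots> = \<bar>w\<bar>^3 / 48" by (simp add: int_U_const)
  finally show ?thesis .
qed

lemma phi_exp: "norm (phi w - complex_of_real (exp (- (w^2/24)))) \<le> \<bar>w\<bar>^3 / 48 + w^4 / 1152"
proof -
  have "norm (phi w - complex_of_real (exp (- (w^2/24))))
      \<le> norm (phi w - (1 - w^2/24)) + norm (complex_of_real (1 - w^2/24) - complex_of_real (exp (- (w^2/24))))"
    by (rule order_trans[OF _ norm_triangle_ineq]) simp
  also have "norm (complex_of_real (1 - w^2/24) - complex_of_real (exp (- (w^2/24)))) \<le> (w^2/24)^2 / 2"
    using exp_neg_bound[of "w^2/24"] by (simp add: norm_of_real abs_minus_commute del: of_real_diff add: of_real_diff[symmetric])
  finally show ?thesis using phi_approx[of w] by (simp add: power2_eq_square power4_eq_xxxx)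
qed



lemma LL_meas: "LL N c \<in> borel_measurable (PP N)"
  unfolding LL_def by (intro borel_measurable_sum borel_measurable_times borel_measurable_const
      borel_measurable_diff comp_meas) auto

lemma int_LL:
  "integral\<^sup>L (PP N) (\<lambda>u. iexp (t * LL N c u / s)) =
     (\<Prod>m\<in>{1..N}. phi (t * (real N * (c m - pbar c N)) / s))"
proof -
  let ?w = "\<lambda>m. t * (real N * (c m - pbar c N)) / s"
  have e: "iexp (t * LL N c u / s) = (\<Prod>m\<in>{1..N}. iexp (?w m * (u m - 1/2)))" for u
  proof -
    have "t * LL N c u / s = (\<Sum>m\<in>{1..N}. ?w m * (u m - 1/2))"
      unfolding LL_def by (simp add: sum_distrib_left sum_divide_distrib mult.assoc)
    then have "\<i> * complex_of_real (t * LL N c u / s) = (\<Sum>m\<in>{1..N}. \<i> * complex_of_real (?w m * (u m - 1/2)))"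
      by (simp add: sum_distrib_left)
    then show ?thesis by (simp add: exp_sum)
  qed
  have "integral\<^sup>L (PP N) (\<lambda>u. iexp (t * LL N c u / s)) = integral\<^sup>L (PP N) (\<lambda>u. \<Prod>m\<in>{1..N}. iexp (?w m * (u m - 1/2)))"
    by (simp only: e)
  also have "\<dots> = (\<Prod>m\<in>{1..N}. integral\<^sup>L U (\<lambda>y. iexp (?w m * (y - 1/2))))"
    unfolding PP_def by (rule PS.product_integral_prod[OF _ integrable_iexpU]) simp
  finally show ?thesis by (simp add: phi_def)
qed

lemma char_LL_bound:
  fixes c :: "nat \<Rightarrow> real" and t s :: real and N :: nat
  defines "w \<equiv> \<lambda>m. t * (real N * (c m - pbar c N)) / s"
  shows "norm (integral\<^sup>L (PP N) (\<lambda>u. iexp (t * LL N c u / s)) - complex_of_real (exp (- ((\<Sum>m\<in>{1..N}. (w m)^2) / 24))))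
     \<le> (\<Sum>m\<in>{1..N}. \<bar>w m\<bar>^3 / 48 + (w m)^4 / 1152)"
proof -
  have p: "complex_of_real (exp (- ((\<Sum>m\<in>{1..N}. (w m)^2) / 24))) = (\<Prod>m\<in>{1..N}. complex_of_real (exp (- ((w m)^2/24))))"
    by (simp add: sum_divide_distrib sum_negf[symmetric] exp_sum of_real_prod)
  have "norm ((\<Prod>m\<in>{1..N}. phi (w m)) - (\<Prod>m\<in>{1..N}. complex_of_real (exp (- ((w m)^2/24)))))
      \<le> (\<Sum>m\<in>{1..N}. norm (phi (w m) - complex_of_real (exp (- ((w m)^2/24)))))"
    by (rule norm_prod_diff) (auto simp: norm_phi norm_of_real)
  also have "\<dots> \<le> (\<Sum>m\<in>{1..N}. \<bar>w m\<bar>^3 / 48 + (w m)^4 / 1152)"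
    by (rule sum_mono) (rule phi_exp)
  finally show ?thesis unfolding int_LL p unfolding w_def .
qed

lemma abs_R_bound:
  assumes c: "\<And>j. j \<in> {1..N} \<Longrightarrow> \<bar>c j\<bar> \<le> 1" and N: "N > 0"
  shows "integral\<^sup>L (PP N) (\<lambda>x. \<bar>RR N c x\<bar>) \<le> 11/4 * real N"
proof -
  interpret P: prob_space "PP N" by (rule prob_PP)
  have Rb: "\<bar>RR N c x\<bar> \<le> real (card (QQ N)) * (3/2)" if x: "x \<in> space (PP N)" for x
  proof -
    have "\<bar>RR N c x\<bar> \<le> (\<Sum>p\<in>QQ N. \<bar>c (snd p) * HH (fst p) (snd p) x\<bar>)"
      unfolding RR_def by (rule sum_abs)
    also have "\<dots> \<le> (\<Sum>p\<in>QQ N. 3/2)"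
    proof (rule sum_mono)
      fix p assume p: "p \<in> QQ N"
      have pq: "fst p \<in> {1..N}" "snd p \<in> {1..N}" using p by (auto simp: QQ_def)
      have "\<bar>HH (fst p) (snd p) x\<bar> \<le> 3/2" unfolding HH_def
        by (rule hh_bound[OF space_PP_range[OF x pq(1)] space_PP_range[OF x pq(2)]])
      then have "\<bar>c (snd p)\<bar> * \<bar>HH (fst p) (snd p) x\<bar> \<le> 1 * (3/2)"
        using c[OF pq(2)] by (intro mult_mono) auto
      then show "\<bar>c (snd p) * HH (fst p) (snd p) x\<bar> \<le> 3/2" by (simp add: abs_mult)
    qed
    finally show ?thesis by simp
  qed
  have intR: "integrable (PP N) (RR N c)"
    by (rule integrable_PP[where B="real (card (QQ N)) * (3/2)"]) (use RR_meas Rb in auto)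
  have intR2: "integrable (PP N) (\<lambda>x. (RR N c x)^2)"
  proof (rule integrable_PP[where B="(real (card (QQ N)) * (3/2))^2"])
    show "(\<lambda>x. (RR N c x)^2) \<in> borel_measurable (PP N)" by (intro borel_measurable_power RR_meas)
    fix x assume x: "x \<in> space (PP N)"
    have "\<bar>RR N c x\<bar>^2 \<le> (real (card (QQ N)) * (3/2))^2" by (rule power_mono[OF Rb[OF x]]) simp
    then show "norm ((RR N c x)^2) \<le> (real (card (QQ N)) * (3/2))^2" by simp
  qed
  have pt: "\<bar>RR N c x\<bar> \<le> (real N + (RR N c x)^2 / real N) / 2" for x
  proof -
    have "0 \<le> (\<bar>RR N c x\<bar> - real N)^2" by simp
    then have "2 * \<bar>RR N c x\<bar> * real N \<le> real N * real N + (RR N c x)^2"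
      by (simp add: power2_eq_square algebra_simps)
    then show ?thesis using N by (simp add: field_simps)
  qed
  have "integral\<^sup>L (PP N) (\<lambda>x. \<bar>RR N c x\<bar>) \<le> integral\<^sup>L (PP N) (\<lambda>x. (real N + (RR N c x)^2 / real N) / 2)"
    by (rule integral_mono) (use intR intR2 pt in auto)
  also have "\<dots> = (real N + integral\<^sup>L (PP N) (\<lambda>x. (RR N c x)^2) / real N) / 2"
    using intR2 by (simp add: Bochner_Integration.integral_add P.prob_space)
  also have "\<dots> \<le> (real N + 9/2 * real N * real N / real N) / 2"
    using RR2_bound[OF c] N by (intro divide_right_mono add_left_mono) auto
  also have "\<dots> = 11/4 * real N" using N by simp
  finally show ?thesis .
qed



lemma RR_bound:
  assumes c: "\<And>j. j \<in> {1..N} \<Longrightarrow> \<bar>c j\<bar> \<le> 1" and x: "x \<in> space (PP N)"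
  shows "\<bar>RR N c x\<bar> \<le> real (card (QQ N)) * (3/2)"
proof -
  have "\<bar>RR N c x\<bar> \<le> (\<Sum>p\<in>QQ N. \<bar>c (snd p) * HH (fst p) (snd p) x\<bar>)"
    unfolding RR_def by (rule sum_abs)
  also have "\<dots> \<le> (\<Sum>p\<in>QQ N. 3/2)"
  proof (rule sum_mono)
    fix p assume p: "p \<in> QQ N"
    have pq: "fst p \<in> {1..N}" "snd p \<in> {1..N}" using p by (auto simp: QQ_def)
    have "\<bar>HH (fst p) (snd p) x\<bar> \<le> 3/2" unfolding HH_def
      by (rule hh_bound[OF space_PP_range[OF x pq(1)] space_PP_range[OF x pq(2)]])
    then have "\<bar>c (snd p)\<bar> * \<bar>HH (fst p) (snd p) x\<bar> \<le> 1 * (3/2)"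
      using c[OF pq(2)] by (intro mult_mono) auto
    then show "\<bar>c (snd p) * HH (fst p) (snd p) x\<bar> \<le> 3/2" by (simp add: abs_mult)
  qed
  finally show ?thesis by simp
qed

lemma pbar_01:
  assumes N: "N > 0" and c: "\<And>j. j \<in> {1..N} \<Longrightarrow> 0 \<le> c j \<and> c j \<le> 1"
  shows "0 \<le> pbar c N" "pbar c N \<le> 1"
proof -
  have "0 \<le> (\<Sum>j=1..N. c j)" using c by (intro sum_nonneg) auto
  then show "0 \<le> pbar c N" by (simp add: pbar_def)
  have "(\<Sum>j=1..N. c j) \<le> (\<Sum>j=1..N. 1)" using c by (intro sum_mono) auto
  then show "pbar c N \<le> 1" using N by (simp add: pbar_def divide_le_eq)
qed

lemma char_T_bound:
  fixes c :: "nat \<Rightarrow> real" and t :: real and N :: nat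
  assumes N: "N > 0" and c: "\<And>j. j \<in> {1..N} \<Longrightarrow> 0 \<le> c j \<and> c j \<le> 1" and sp: "sigma2 c N > 0"
  defines "s \<equiv> sqrt (sigma2 c N)"
  defines "\<beta> \<equiv> real N / s"
  shows "norm (integral\<^sup>L (rank_law N) (\<lambda>r. iexp (t * (centered c r N / s))) - complex_of_real (exp (- (t^2 * (real N / (real N + 1))) / 2)))
     \<le> 11/4 * \<bar>t\<bar> * \<beta> + (\<bar>t\<bar> * \<beta> / 48 + t^2 * \<beta>^2 / 1152) * (12 * t^2)"
proof -
  interpret P: prob_space "PP N" by (rule prob_PP)
  have s: "s > 0" using sp by (simp add: s_def)
  have ss: "s^2 = sigma2 c N" using sp by (simp add: s_def)
  have cabs: "\<And>j. j \<in> {1..N} \<Longrightarrow> \<bar>c j\<bar> \<le> 1" using c by auto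
  define D where "D = (\<Sum>j=1..N. (c j - pbar c N)^2)"
  have sig: "sigma2 c N = real N * (real N + 1) / 12 * D" by (simp add: sigma2_def D_def)
  have Dp: "D > 0"
  proof -
    have "0 \<le> D" unfolding D_def by (intro sum_nonneg) simp
    moreover have "D \<noteq> 0" using sp by (auto simp: sig)
    ultimately show ?thesis by simp
  qed
  define h where "h x = iexp (t * (x / s))" for x
  have hm: "h \<in> borel_measurable borel" unfolding h_def using s by (intro borel_measurable_continuous_onI continuous_intros) auto
  have m1: "(\<lambda>u. h (LL N c u + RR N c u)) \<in> borel_measurable (PP N)"
    by (rule measurable_compose[OF borel_measurable_add[OF LL_meas RR_meas] hm])
  have m2: "(\<lambda>u. h (LL N c u)) \<in> borel_measurable (PP N)"
    by (rule measurable_compose[OF LL_meas hm])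
  have i1: "integrable (PP N) (\<lambda>u. h (LL N c u + RR N c u))"
    by (rule integrable_PP[where B=1]) (use m1 in \<open>auto simp: h_def norm_exp_i_times\<close>)
  have i2: "integrable (PP N) (\<lambda>u. h (LL N c u))"
    by (rule integrable_PP[where B=1]) (use m2 in \<open>auto simp: h_def norm_exp_i_times\<close>)
  have iR: "integrable (PP N) (\<lambda>u. \<bar>RR N c u\<bar>)"
    by (rule integrable_PP[where B="real (card (QQ N)) * (3/2)"]) (use RR_meas RR_bound[OF cabs] in auto)
  have tr: "integral\<^sup>L (rank_law N) (\<lambda>r. iexp (t * (centered c r N / s))) = integral\<^sup>L (PP N) (\<lambda>u. h (LL N c u + RR N c u))"
  proof -
    have "integral\<^sup>L (rank_law N) (\<lambda>r. iexp (t * (centered c r N / s))) = integral\<^sup>L (PP N) (\<lambda>u. iexp (t * (centered c (rk N u) N / s)))"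
      by (rule rank_law_eq) (use m1 in \<open>simp add: centered_decomp h_def\<close>)
    then show ?thesis by (simp add: centered_decomp h_def)
  qed
  have b1: "norm (integral\<^sup>L (PP N) (\<lambda>u. h (LL N c u + RR N c u)) - integral\<^sup>L (PP N) (\<lambda>u. h (LL N c u))) \<le> 11/4 * \<bar>t\<bar> * \<beta>"
  proof -
    have "norm (integral\<^sup>L (PP N) (\<lambda>u. h (LL N c u + RR N c u)) - integral\<^sup>L (PP N) (\<lambda>u. h (LL N c u)))
        = norm (integral\<^sup>L (PP N) (\<lambda>u. h (LL N c u + RR N c u) - h (LL N c u)))"
      using i1 i2 by (simp add: Bochner_Integration.integral_diff)
    also have "\<dots> \<le> integral\<^sup>L (PP N) (\<lambda>u. norm (h (LL N c u + RR N c u) - h (LL N c u)))"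
      by (rule integral_norm_bound)
    also have "\<dots> \<le> integral\<^sup>L (PP N) (\<lambda>u. \<bar>t\<bar> / s * \<bar>RR N c u\<bar>)"
    proof (rule integral_mono)
      show "integrable (PP N) (\<lambda>u. norm (h (LL N c u + RR N c u) - h (LL N c u)))"
        using i1 i2 by auto
      show "integrable (PP N) (\<lambda>u. \<bar>t\<bar> / s * \<bar>RR N c u\<bar>)" using iR by auto
      fix u
      have "h (LL N c u + RR N c u) - h (LL N c u) = h (LL N c u) * (iexp (t * (RR N c u / s)) - 1)"
        by (simp add: h_def add_divide_distrib distrib_left algebra_simps exp_add[symmetric])
      then have "norm (h (LL N c u + RR N c u) - h (LL N c u)) = norm (iexp (t * (RR N c u / s)) - 1)"
        by (simp add: norm_mult h_def norm_exp_i_times)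
      also have "\<dots> \<le> \<bar>t * (RR N c u / s)\<bar>"
        using iexp_approx1[of "t * (RR N c u / s)" 0] by simp
      also have "\<dots> = \<bar>t\<bar> / s * \<bar>RR N c u\<bar>" using s by (simp add: abs_mult)
      finally show "norm (h (LL N c u + RR N c u) - h (LL N c u)) \<le> \<bar>t\<bar> / s * \<bar>RR N c u\<bar>" .
    qed
    also have "\<dots> = \<bar>t\<bar> / s * integral\<^sup>L (PP N) (\<lambda>u. \<bar>RR N c u\<bar>)" by simp
    also have "\<dots> \<le> \<bar>t\<bar> / s * (11/4 * real N)"
    proof (rule mult_left_mono[OF abs_R_bound[OF cabs N]])
      show "0 \<le> \<bar>t\<bar> / s" using s by (intro divide_nonneg_pos) auto
    qed
    also have "\<dots> = 11/4 * \<bar>t\<bar> * \<beta>" by (simp add: \<beta>_def)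
    finally show ?thesis .
  qed
  define w where "w m = t * (real N * (c m - pbar c N)) / s" for m
  have wsq: "(\<Sum>m\<in>{1..N}. (w m)^2) = 12 * t^2 * (real N / (real N + 1))"
  proof -
    have "(\<Sum>m\<in>{1..N}. (w m)^2) = t^2 * real N^2 / s^2 * D"
      by (simp add: w_def D_def power_mult_distrib power_divide sum_distrib_left sum_divide_distrib mult_ac)
    also have "\<dots> = 12 * t^2 * (real N / (real N + 1))"
    proof -
      have nz: "real N * (real N + 1) / 12 * D \<noteq> 0" "real N + 1 \<noteq> 0" using Dp N by auto
      have "t^2 * real N^2 / (real N * (real N + 1) / 12 * D) * D = 12 * t^2 * (real N / (real N + 1))"
        using nz by (simp add: divide_simps) (simp add: algebra_simps power2_eq_square)
      then show ?thesis unfolding ss sig .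
    qed
    finally show ?thesis .
  qed
  have wb: "\<bar>w m\<bar> \<le> \<bar>t\<bar> * \<beta>" if m: "m \<in> {1..N}" for m
  proof -
    have "\<bar>c m - pbar c N\<bar> \<le> 1" using c[OF m] pbar_01[of N c, OF N c] by auto
    then have "\<bar>t\<bar> * (real N * \<bar>c m - pbar c N\<bar>) \<le> \<bar>t\<bar> * (real N * 1)"
      by (intro mult_left_mono) auto
    then show ?thesis using s by (simp add: w_def \<beta>_def abs_mult divide_right_mono)
  qed
  have b2: "norm (integral\<^sup>L (PP N) (\<lambda>u. h (LL N c u)) - complex_of_real (exp (- (t^2 * (real N / (real N + 1))) / 2)))
      \<le> (\<bar>t\<bar> * \<beta> / 48 + t^2 * \<beta>^2 / 1152) * (12 * t^2)"
  proof -
    have e: "integral\<^sup>L (PP N) (\<lambda>u. h (LL N c u)) = integral\<^sup>L (PP N) (\<lambda>u. iexp (t * LL N c u / s))"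
      by (simp add: h_def)
    have ex: "- (t^2 * (real N / (real N + 1))) / 2 = - ((\<Sum>m\<in>{1..N}. (w m)^2) / 24)"
      unfolding wsq by (simp add: field_simps)
    have "norm (integral\<^sup>L (PP N) (\<lambda>u. h (LL N c u)) - complex_of_real (exp (- (t^2 * (real N / (real N + 1))) / 2)))
        \<le> (\<Sum>m\<in>{1..N}. \<bar>w m\<bar>^3 / 48 + (w m)^4 / 1152)"
      unfolding e ex using char_LL_bound[where t=t and N=N and c=c and s=s] unfolding w_def by simp
    also have "\<dots> \<le> (\<Sum>m\<in>{1..N}. (\<bar>t\<bar> * \<beta> / 48 + t^2 * \<beta>^2 / 1152) * (w m)^2)"
    proof (rule sum_mono)
      fix m assume m: "m \<in> {1..N}"
      have a: "\<bar>w m\<bar>^3 \<le> \<bar>t\<bar> * \<beta> * (w m)^2"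
        using mult_right_mono[OF wb[OF m], of "(w m)^2"] by (simp add: power3_eq_cube power2_eq_square)
      have "(w m)^2 \<le> (\<bar>t\<bar> * \<beta>)^2" using power_mono[OF wb[OF m], of 2] by simp
      then have b: "(w m)^4 \<le> t^2 * \<beta>^2 * (w m)^2"
        using mult_right_mono[of "(w m)^2" "(\<bar>t\<bar> * \<beta>)^2" "(w m)^2"]
        by (simp add: power_mult_distrib power4_eq_xxxx power2_eq_square mult_ac)
      show "\<bar>w m\<bar>^3 / 48 + (w m)^4 / 1152 \<le> (\<bar>t\<bar> * \<beta> / 48 + t^2 * \<beta>^2 / 1152) * (w m)^2"
        using a b by (simp add: field_simps)
    qed
    also have "\<dots> = (\<bar>t\<bar> * \<beta> / 48 + t^2 * \<beta>^2 / 1152) * (\<Sum>m\<in>{1..N}. (w m)^2)"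
      by (simp add: sum_distrib_left)
    also have "\<dots> \<le> (\<bar>t\<bar> * \<beta> / 48 + t^2 * \<beta>^2 / 1152) * (12 * t^2)"
    proof (rule mult_left_mono)
      have "real N / (real N + 1) \<le> 1" by simp
      then show "(\<Sum>m\<in>{1..N}. (w m)^2) \<le> 12 * t^2" unfolding wsq
        by (intro mult_right_le_one_le) auto
      show "0 \<le> \<bar>t\<bar> * \<beta> / 48 + t^2 * \<beta>^2 / 1152" using s by (simp add: \<beta>_def)
    qed
    finally show ?thesis .
  qed
  show ?thesis unfolding tr
    using norm_triangle_ineq[of "integral\<^sup>L (PP N) (\<lambda>u. h (LL N c u + RR N c u)) - integral\<^sup>L (PP N) (\<lambda>u. h (LL N c u))"
        "integral\<^sup>L (PP N) (\<lambda>u. h (LL N c u)) - complex_of_real (exp (- (t^2 * (real N / (real N + 1))) / 2))"] b1 b2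
    by simp
qed



lemma prob_rank_law: "prob_space (rank_law N)"
  unfolding rank_law_def by (rule prob_space_measure_pmf)

lemma meas_rank_law: "f \<in> borel_measurable (rank_law N)"
  unfolding rank_law_def by simp

lemma real_distr_rank_law: "real_distribution (distr (rank_law N) borel f)"
proof -
  interpret prob_space "rank_law N" by (rule prob_rank_law)
  show ?thesis by (rule real_distribution_distr) (rule meas_rank_law)
qed

lemma T_weak_conv:
  fixes p1 :: "nat \<Rightarrow> real" and \<nu> :: real
  assumes p: "\<forall>j\<ge>1. 0 \<le> p1 j \<and> p1 j \<le> 1"
    and V: "(\<lambda>N. (\<Sum>j=1..N. (p1 j - pbar p1 N)^2) / real N) \<longlonglongrightarrow> \<nu>" and \<nu>: "0 < \<nu>"
  shows "weak_conv_m (\<lambda>N. distr (rank_law N) borel (\<lambda>r. centered p1 r N / sqrt (sigma2 p1 N))) std_normal_distribution"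
proof -
  define Vf where "Vf N = (\<Sum>j=1..N. (p1 j - pbar p1 N)^2) / real N" for N
  define \<beta> where "\<beta> N = real N / sqrt (sigma2 p1 N)" for N
  have V': "Vf \<longlonglongrightarrow> \<nu>" using V by (simp add: Vf_def[abs_def])
  have evV: "eventually (\<lambda>N. 0 < Vf N) sequentially" using order_tendstoD(1)[OF V' \<nu>] .
  have good: "eventually (\<lambda>N. 0 < N \<and> 0 < Vf N \<and> 0 < sigma2 p1 N) sequentially"
    using evV
  proof eventually_elim
    case (elim N)
    have N: "N > 0" using elim by (cases N) (auto simp: Vf_def)
    have "sigma2 p1 N = real N * (real N + 1) / 12 * (real N * Vf N)"
      using N by (simp add: sigma2_def Vf_def)
    moreover have "0 < real N * (real N + 1) / 12 * (real N * Vf N)" using N elim by simp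
    ultimately have "0 < sigma2 p1 N" by simp
    then show ?case using N elim by simp
  qed
  have b2: "(\<lambda>N. 12 * (inverse (real (Suc N))) * inverse (Vf N)) \<longlonglongrightarrow> 12 * 0 * inverse \<nu>"
    by (intro tendsto_intros LIMSEQ_inverse_real_of_nat V') (use \<nu> in simp)
  have b: "\<beta> \<longlonglongrightarrow> 0"
  proof (rule Lim_transform_eventually)
    show "(\<lambda>N. sqrt (12 * (inverse (real (Suc N))) * inverse (Vf N))) \<longlonglongrightarrow> 0"
      using tendsto_real_sqrt[OF b2] by simp
    show "eventually (\<lambda>N. sqrt (12 * (inverse (real (Suc N))) * inverse (Vf N)) = \<beta> N) sequentially"
      using good
    proof eventually_elim
      case (elim N)
      have sg: "sigma2 p1 N = real N * (real N + 1) / 12 * (real N * Vf N)"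
        using elim by (simp add: sigma2_def Vf_def)
      have "\<beta> N = sqrt (real N ^ 2) / sqrt (sigma2 p1 N)" by (simp add: \<beta>_def)
      also have "\<dots> = sqrt (real N ^ 2 / sigma2 p1 N)" by (simp add: real_sqrt_divide)
      also have "real N ^ 2 / sigma2 p1 N = 12 * (inverse (real (Suc N))) * inverse (Vf N)"
      proof -
        have nz: "real N \<noteq> 0" "Vf N \<noteq> 0" "real N + 1 \<noteq> 0" using elim by auto
        show ?thesis unfolding sg using nz
          by (simp add: divide_simps) (simp add: algebra_simps power2_eq_square)
      qed
      finally show ?case by simp
    qed
  qed
  show ?thesis
  proof (rule levy_continuity)
    show "\<And>n. real_distribution (distr (rank_law n) borel (\<lambda>r. centered p1 r n / sqrt (sigma2 p1 n)))"
      by (rule real_distr_rank_law)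
    show "real_distribution std_normal_distribution" by (rule real_dist_normal_dist)
    fix t :: real
    define B where "B N = 11/4 * \<bar>t\<bar> * \<beta> N + (\<bar>t\<bar> * \<beta> N / 48 + t^2 * (\<beta> N)^2 / 1152) * (12 * t^2)" for N
    define E where "E N = complex_of_real (exp (- (t^2 * (real N / (real N + 1))) / 2))" for N
    have Bt: "B \<longlonglongrightarrow> 11/4 * \<bar>t\<bar> * 0 + (\<bar>t\<bar> * 0 / 48 + t^2 * 0^2 / 1152) * (12 * t^2)"
      unfolding B_def by (intro tendsto_intros b) auto
    have Et: "E \<longlonglongrightarrow> complex_of_real (exp (- (t^2 * 1) / 2))"
    proof -
      have "(\<lambda>N. real N / (real N + 1)) \<longlonglongrightarrow> 1"
        using LIMSEQ_n_over_Suc_n[where 'a=real] by (simp add: add.commute)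
      then show ?thesis unfolding E_def by (intro tendsto_intros) auto
    qed
    have ch: "char (distr (rank_law N) borel (\<lambda>r. centered p1 r N / sqrt (sigma2 p1 N))) t
        = integral\<^sup>L (rank_law N) (\<lambda>r. iexp (t * (centered p1 r N / sqrt (sigma2 p1 N))))" for N
      unfolding char_def by (rule integral_distr) (auto intro: meas_rank_law)
    have "(\<lambda>N. char (distr (rank_law N) borel (\<lambda>r. centered p1 r N / sqrt (sigma2 p1 N))) t - E N) \<longlonglongrightarrow> 0"
    proof (rule Lim_null_comparison)
      show "B \<longlonglongrightarrow> 0" using Bt by simp
      show "eventually (\<lambda>N. norm (char (distr (rank_law N) borel (\<lambda>r. centered p1 r N / sqrt (sigma2 p1 N))) t - E N) \<le> B N) sequentially"
        using good
      proof eventually_elim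
        case (elim N)
        have c: "\<And>j. j \<in> {1..N} \<Longrightarrow> 0 \<le> p1 j \<and> p1 j \<le> 1" using p by auto
        show ?case unfolding ch E_def B_def \<beta>_def
          using char_T_bound[of N p1 t, OF _ c] elim by simp
      qed
    qed
    then have "(\<lambda>N. char (distr (rank_law N) borel (\<lambda>r. centered p1 r N / sqrt (sigma2 p1 N))) t) \<longlonglongrightarrow> complex_of_real (exp (- (t^2 * 1) / 2))"
      by (rule Lim_transform[OF Et])
    then show "(\<lambda>N. char (distr (rank_law N) borel (\<lambda>r. centered p1 r N / sqrt (sigma2 p1 N))) t) \<longlonglongrightarrow> char std_normal_distribution t"
      by (simp add: char_std_normal_distribution)
  qed
qed



lemma sigma2_nonneg: "0 \<le> sigma2 p N"
  unfolding sigma2_def by (intro mult_nonneg_nonneg sum_nonneg) auto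

lemma Hstar_sq: "Hstar p r N = (centered p r N / sqrt (sigma2 p N))^2"
  unfolding Hstar_def using sigma2_nonneg[of p N] by (simp add: power_divide)

lemma real_distr_chi2: "real_distribution chi2_1"
proof -
  interpret real_distribution std_normal_distribution by (rule real_dist_normal_dist)
  show ?thesis unfolding chi2_1_def by (rule real_distribution_distr) simp
qed

lemma sq_weak_conv:
  fixes T :: "nat \<Rightarrow> (nat \<Rightarrow> nat) \<Rightarrow> real"
  assumes w: "weak_conv_m (\<lambda>N. distr (rank_law N) borel (T N)) std_normal_distribution"
  shows "weak_conv_m (\<lambda>N. distr (rank_law N) borel (\<lambda>r. (T N r)^2)) chi2_1"
proof (rule integral_bdd_continuous_conv_imp_weak_conv)
  show "\<And>n. real_distribution (distr (rank_law n) borel (\<lambda>r. (T n r)^2))" by (rule real_distr_rank_law)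
  show "real_distribution chi2_1" by (rule real_distr_chi2)
  fix f :: "real \<Rightarrow> real"
  assume fc: "\<And>x. isCont f x" and fb: "\<And>x. \<bar>f x\<bar> \<le> 1"
  have fm: "f \<in> borel_measurable borel"
    by (intro borel_measurable_continuous_onI continuous_at_imp_continuous_on) (use fc in auto)
  have gc: "\<And>x. isCont (\<lambda>x. f (x^2)) x"
    by (rule continuous_at_compose[unfolded o_def, OF _ fc]) (intro continuous_intros)
  have gm: "(\<lambda>x. f (x^2)) \<in> borel_measurable borel"
    by (rule measurable_compose[OF _ fm]) simp
  have conv: "(\<lambda>n. integral\<^sup>L (distr (rank_law n) borel (T n)) (\<lambda>x. f (x^2))) \<longlonglongrightarrow> integral\<^sup>L std_normal_distribution (\<lambda>x. f (x^2))"
    by (rule weak_conv_imp_integral_bdd_continuous_conv[OF real_distr_rank_law real_dist_normal_dist w, where B=1])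
       (use gc fb in auto)
  have e1: "integral\<^sup>L (distr (rank_law n) borel (\<lambda>r. (T n r)^2)) f = integral\<^sup>L (distr (rank_law n) borel (T n)) (\<lambda>x. f (x^2))" for n
    by (simp add: integral_distr meas_rank_law fm gm)
  have e2: "integral\<^sup>L chi2_1 f = integral\<^sup>L std_normal_distribution (\<lambda>x. f (x^2))"
    unfolding chi2_1_def by (rule integral_distr) (auto intro: fm)
  show "(\<lambda>n. integral\<^sup>L (distr (rank_law n) borel (\<lambda>r. (T n r)^2)) f) \<longlonglongrightarrow> integral\<^sup>L chi2_1 f"
    unfolding e1 e2 by (rule conv)
qed

theorem mainTheorem3:
  shows
  "(\<forall>(N::nat) (p1::nat \<Rightarrow> real) (p2::nat \<Rightarrow> real) (r::nat \<Rightarrow> nat).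
      (\<forall>j\<in>{1..N}. 0 \<le> p1 j \<and> p1 j \<le> 1 \<and> 0 \<le> p2 j \<and> p2 j \<le> 1 \<and> p1 j + p2 j = 1)
      \<and> (\<exists>j\<in>{1..N}. \<exists>j'\<in>{1..N}. p1 j \<noteq> p1 j')
      \<and> bij_betw r {1..N} {1..N}
      \<longrightarrow> centered p1 r N / sqrt (sigma2 p1 N) = - (centered p2 r N / sqrt (sigma2 p2 N))
        \<and> Hstar p1 r N = Hstar p2 r N)
   \<and>
   (\<forall>(p1::nat \<Rightarrow> real) (\<pi>::real) (\<nu>::real).
      (\<forall>j\<ge>1. 0 \<le> p1 j \<and> p1 j \<le> 1)
      \<and> (\<lambda>N. pbar p1 N) \<longlonglongrightarrow> \<pi> \<and> 0 < \<pi> \<and> \<pi> < 1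
      \<and> (\<lambda>N. (\<Sum>j=1..N. (p1 j - pbar p1 N)^2) / real N) \<longlonglongrightarrow> \<nu> \<and> 0 < \<nu>
      \<longrightarrow> weak_conv_m (\<lambda>N. distr (rank_law N) borel (\<lambda>r. Hstar p1 r N)) chi2_1
        \<and> weak_conv_m (\<lambda>N. distr (rank_law N) borel (\<lambda>r. Hstar (\<lambda>j. 1 - p1 j) r N)) chi2_1)"
proof (intro conjI allI impI)
  fix N :: nat and p1 p2 :: "nat \<Rightarrow> real" and r :: "nat \<Rightarrow> nat"
  assume h: "(\<forall>j\<in>{1..N}. 0 \<le> p1 j \<and> p1 j \<le> 1 \<and> 0 \<le> p2 j \<and> p2 j \<le> 1 \<and> p1 j + p2 j = 1)
      \<and> (\<exists>j\<in>{1..N}. \<exists>j'\<in>{1..N}. p1 j \<noteq> p1 j') \<and> bij_betw r {1..N} {1..N}"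
  have h1: "\<forall>j\<in>{1..N}. p1 j + p2 j = 1" using h by auto
  have b: "bij_betw r {1..N} {1..N}" using h by auto
  note e = part1_aux[OF h1 b]
  show "centered p1 r N / sqrt (sigma2 p1 N) = - (centered p2 r N / sqrt (sigma2 p2 N))"
    using e by simp
  show "Hstar p1 r N = Hstar p2 r N" unfolding Hstar_def using e by simp
next
  fix p1 :: "nat \<Rightarrow> real" and \<pi> \<nu> :: real
  assume h: "(\<forall>j\<ge>1. 0 \<le> p1 j \<and> p1 j \<le> 1)
      \<and> (\<lambda>N. pbar p1 N) \<longlonglongrightarrow> \<pi> \<and> 0 < \<pi> \<and> \<pi> < 1
      \<and> (\<lambda>N. (\<Sum>j=1..N. (p1 j - pbar p1 N)^2) / real N) \<longlonglongrightarrow> \<nu> \<and> 0 < \<nu>"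
  have w: "weak_conv_m (\<lambda>N. distr (rank_law N) borel (\<lambda>r. centered p1 r N / sqrt (sigma2 p1 N))) std_normal_distribution"
    by (rule T_weak_conv) (use h in auto)
  have w2: "weak_conv_m (\<lambda>N. distr (rank_law N) borel (\<lambda>r. (centered p1 r N / sqrt (sigma2 p1 N))^2)) chi2_1"
    by (rule sq_weak_conv[OF w])
  show W1: "weak_conv_m (\<lambda>N. distr (rank_law N) borel (\<lambda>r. Hstar p1 r N)) chi2_1"
    using w2 by (simp add: Hstar_sq)
  have d: "distr (rank_law N) borel (\<lambda>r. Hstar (\<lambda>j. 1 - p1 j) r N) = distr (rank_law N) borel (\<lambda>r. Hstar p1 r N)" for N
  proof (rule distr_cong_AE)
    show "AE x in rank_law N. Hstar (\<lambda>j. 1 - p1 j) x N = Hstar p1 x N"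
      unfolding rank_law_def AE_measure_pmf_iff
    proof
      fix y assume "y \<in> set_pmf (pmf_of_set {\<sigma>. \<sigma> permutes {1..N}})"
      then have "y permutes {1..N}"
        using finite_Perms[of N] Perms_ne[of N] by (simp add: Perms_def)
      then have b: "bij_betw y {1..N} {1..N}" by (rule permutes_imp_bij)
      have h1: "\<forall>j\<in>{1..N}. p1 j + (1 - p1 j) = 1" by simp
      note e = part1_aux[OF h1 b]
      show "Hstar (\<lambda>j. 1 - p1 j) y N = Hstar p1 y N" unfolding Hstar_def using e by simp
    qed
  qed (auto intro: meas_rank_law)
  show "weak_conv_m (\<lambda>N. distr (rank_law N) borel (\<lambda>r. Hstar (\<lambda>j. 1 - p1 j) r N)) chi2_1"
    unfolding d by (rule W1)
qed

end
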